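(* Let $g,\gamma \ge 0$ be integers and let ${\rm T}$ be a $(3,\gamma)$-hyperelliptic numerical semigroup of genus $g$, with $u_1 := u_1({\rm T})$. Then $\#{\rm T}_{3-(u_1)_3} \leq \gamma + \lceil \frac{\chi}{3}\rceil$, where $\chi := u_1 - g + 3\gamma - 1 - \lfloor \frac{(g)_3}{2}\rfloor$.
   Context: A numerical semigroup is a submonoid ${\rm S}\subseteq\mathbb{N}$ with finite complement; its genus is $\#(\mathbb{N}\setminus{\rm S})$. For an integer $u$, $(u)_3$ denotes its residue modulo 3 in $\{0,1,2\}$. Let $[2g]=\{1,\dots,2g\}$, ${\rm T}^*={\rm T}\cap[2g]$, and ${\rm T}_i=\{t\in{\rm T}^*:(t)_3=i\}$ for $i\in\{0,1,2\}$. A numerical semigroup is $(3,\gamma)$-hyperelliptic if its first $\gamma$ positive elements are multiples of 3 with the $\gamma$-th equal to $6\gamma$, and $3(2\gamma+1)$ belongs to it. $u_1({\rm T}) := \min\{t \in {\rm T} : (t)_3 \neq 0\}$. *)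

theory Defs
  imports Complex_Main "HOL-Library.Infinite_Set"
begin

definition numerical_semigroup :: "nat set \<Rightarrow> bool" where
  "numerical_semigroup S \<longleftrightarrow> 0 \<in> S \<and> (\<forall>a\<in>S. \<forall>b\<in>S. a + b \<in> S) \<and> finite (UNIV - S)"

definition genus :: "nat set \<Rightarrow> nat" where
  "genus S = card (UNIV - S)"

text \<open>The i-th positive element of S (1-indexed): enumerate is 0-indexed.\<close>
definition pos_elem :: "nat set \<Rightarrow> nat \<Rightarrow> nat" where
  "pos_elem S i = enumerate {s \<in> S. 0 < s} (i - 1)"

definition hyperelliptic3 :: "nat \<Rightarrow> nat set \<Rightarrow> bool" where
  "hyperelliptic3 \<gamma> S \<longleftrightarrow> numerical_semigroup S
     \<and> (\<forall>i\<in>{1..\<gamma>}. 3 dvd pos_elem S i)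
     \<and> (\<gamma> \<ge> 1 \<longrightarrow> pos_elem S \<gamma> = 6 * \<gamma>)
     \<and> 3 * (2 * \<gamma> + 1) \<in> S"

definition u1 :: "nat set \<Rightarrow> nat" where
  "u1 T = (LEAST t. t \<in> T \<and> t mod 3 \<noteq> 0)"

definition Tres :: "nat set \<Rightarrow> nat \<Rightarrow> nat \<Rightarrow> nat set" where
  "Tres T g i = {t \<in> T \<inter> {1..2*g}. t mod 3 = i}"

end

theory Submission
  imports Defs
begin

lemma pair_card:
  fixes S :: "nat set"
  assumes "0 \<in> S" "\<forall>a\<in>S. \<forall>b\<in>S. a + b \<in> S" "x \<notin> S"
  shows "card (S \<inter> {..x}) \<le> card ({..x} - S)"
proof (rule card_inj_on_le[where f = "\<lambda>s. x - s"])
  show "inj_on (\<lambda>s. x - s) (S \<inter> {..x})" by (auto simp: inj_on_def)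
  show "(\<lambda>s. x - s) ` (S \<inter> {..x}) \<subseteq> {..x} - S"
  proof
    fix y assume "y \<in> (\<lambda>s. x - s) ` (S \<inter> {..x})"
    then obtain s where s: "s \<in> S" "s \<le> x" "y = x - s" by auto
    have "y \<notin> S"
    proof
      assume "y \<in> S"
      then have "s + y \<in> S" using assms(2) s by blast
      with s assms(3) show False by simp
    qed
    then show "y \<in> {..x} - S" using s by auto
  qed
qed auto

lemma card_split_atMost:
  fixes S :: "nat set"
  shows "card (S \<inter> {..x}) + card ({..x} - S) = Suc x"
proof -
  have "{..x} = (S \<inter> {..x}) \<union> ({..x} - S)" by auto
  then have "card {..x} = card (S \<inter> {..x}) + card ({..x} - S)"
    by (metis card_Un_disjoint finite_Diff finite_Int finite_atMost Diff_disjoint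
        Int_Diff_disjoint inf_commute)
  then show ?thesis by simp
qed

lemma gap_bound:
  assumes "numerical_semigroup T" "x \<notin> T"
  shows "0 < x \<and> x < 2 * genus T"
proof -
  have T0: "0 \<in> T" and add: "\<forall>a\<in>T. \<forall>b\<in>T. a + b \<in> T" and fin: "finite (UNIV - T)"
    using assms(1) unfolding numerical_semigroup_def by auto
  have "0 < x" using T0 assms(2) by (cases x) auto
  have p: "card (T \<inter> {..x}) \<le> card ({..x} - T)" using pair_card[OF T0 add assms(2)] .
  have "card ({..x} - T) \<le> card (UNIV - T)" by (rule card_mono[OF fin]) auto
  with p card_split_atMost[of T x] have "Suc x \<le> 2 * card (UNIV - T)" by linarith
  then show ?thesis using \<open>0 < x\<close> unfolding genus_def by simp
qed

lemma mult3:
  assumes "hyperelliptic3 \<gamma> T"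
  shows "card ({1..2*\<gamma>} - {k. 3*k \<in> T}) \<le> \<gamma> \<and> (\<forall>k\<ge>2*\<gamma>. 3*k \<in> T)"
proof -
  have ns: "numerical_semigroup T" and dv: "\<forall>i\<in>{1..\<gamma>}. 3 dvd pos_elem T i"
    and six: "\<gamma> \<ge> 1 \<longrightarrow> pos_elem T \<gamma> = 6 * \<gamma>" and st: "3 * (2 * \<gamma> + 1) \<in> T"
    using assms unfolding hyperelliptic3_def by auto
  have T0: "0 \<in> T" and add: "\<forall>a\<in>T. \<forall>b\<in>T. a + b \<in> T" and fin: "finite (UNIV - T)"
    using ns unfolding numerical_semigroup_def by auto
  define S' where "S' = {k. 3*k \<in> T}"
  define P where "P = {s \<in> T. 0 < s}"
  have "infinite (UNIV - (UNIV - T) - {0::nat})" using fin by simp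
  moreover have "UNIV - (UNIV - T) - {0::nat} = P" unfolding P_def by auto
  ultimately have infP: "infinite P" by simp
  define e where "e = enumerate P"
  have eP: "e i \<in> P" for i unfolding e_def using enumerate_in_set[OF infP] .
  have emono: "i < j \<Longrightarrow> e i < e j" for i j unfolding e_def using enumerate_mono[OF _ infP] by blast
  have key: "e i div 3 \<in> S' \<inter> {1..2*\<gamma>} \<and> 3 * (e i div 3) = e i" if "i < \<gamma>" for i
  proof -
    have "3 dvd e i" using dv[rule_format, of "Suc i"] that unfolding pos_elem_def e_def P_def by auto
    moreover have "e i \<le> 6 * \<gamma>"
    proof -
      have "e i \<le> e (\<gamma> - 1)"
      proof (cases "i < \<gamma> - 1")
        case True then show ?thesis using emono[of i "\<gamma> - 1"] by simp
      next
        case False then have "i = \<gamma> - 1" using that by simp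
        then show ?thesis by simp
      qed
      also have "\<dots> = 6 * \<gamma>" using six that unfolding pos_elem_def e_def P_def by auto
      finally show ?thesis .
    qed
    moreover have "e i \<in> T" "0 < e i" using eP[of i] unfolding P_def by auto
    ultimately show ?thesis unfolding S'_def by auto
  qed
  have "inj_on (\<lambda>i. e i div 3) {..<\<gamma>}"
  proof (rule inj_onI)
    fix i j assume "i \<in> {..<\<gamma>}" "j \<in> {..<\<gamma>}" "e i div 3 = e j div 3"
    then have "e i = e j" using key by (metis lessThan_iff)
    then show "i = j" using emono by (metis linorder_neqE_nat less_irrefl)
  qed
  then have "card ((\<lambda>i. e i div 3) ` {..<\<gamma>}) = \<gamma>" by (simp add: card_image)
  moreover have "(\<lambda>i. e i div 3) ` {..<\<gamma>} \<subseteq> S' \<inter> {1..2*\<gamma>}" using key by auto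
  ultimately have ge: "\<gamma> \<le> card (S' \<inter> {1..2*\<gamma>})"
    by (metis card_mono finite_Int finite_atLeastAtMost)
  have "card (S' \<inter> {1..2*\<gamma>}) + card ({1..2*\<gamma>} - S') = card {1..2*\<gamma>}"
  proof -
    have "{1..2*\<gamma>} = (S' \<inter> {1..2*\<gamma>}) \<union> ({1..2*\<gamma>} - S')" by auto
    then show ?thesis
      by (metis card_Un_disjoint finite_Diff finite_Int finite_atLeastAtMost Diff_disjoint
          Int_Diff_disjoint inf_commute)
  qed
  with ge have c1: "card ({1..2*\<gamma>} - S') \<le> \<gamma>" by simp
  have S0: "0 \<in> S'" using T0 unfolding S'_def by simp
  have Sadd: "\<forall>a\<in>S'. \<forall>b\<in>S'. a + b \<in> S'" using add unfolding S'_def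
    by (simp add: add_mult_distrib2)
  have a2: "2*\<gamma> \<in> S'"
  proof (cases "\<gamma> \<ge> 1")
    case True
    have "e (\<gamma> - 1) = 6 * \<gamma>" using six True unfolding pos_elem_def e_def P_def by auto
    then have "6 * \<gamma> \<in> T" using eP[of "\<gamma> - 1"] unfolding P_def by auto
    then show ?thesis unfolding S'_def by simp
  next
    case False then have "\<gamma> = 0" by simp
    then show ?thesis using S0 by simp
  qed
  have a3: "2*\<gamma>+1 \<in> S'" using st unfolding S'_def by simp
  have all: "\<forall>k\<ge>2*\<gamma>. k \<in> S'"
  proof (rule ccontr)
    assume "\<not> (\<forall>k\<ge>2*\<gamma>. k \<in> S')"
    then obtain k0 where "k0 \<ge> 2*\<gamma>" "k0 \<notin> S'" by auto
    define k where "k = (LEAST k. k \<ge> 2*\<gamma> \<and> k \<notin> S')"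
    have k: "k \<ge> 2*\<gamma>" "k \<notin> S'" using LeastI[of "\<lambda>k. k \<ge> 2*\<gamma> \<and> k \<notin> S'" k0]
      \<open>k0 \<ge> 2*\<gamma>\<close> \<open>k0 \<notin> S'\<close> unfolding k_def by auto
    have kmin: "j \<ge> 2*\<gamma> \<Longrightarrow> j \<notin> S' \<Longrightarrow> k \<le> j" for j
      unfolding k_def by (rule Least_le) auto
    have "{..k} - S' \<subseteq> ({1..2*\<gamma>} - S') \<union> {k}"
    proof
      fix j assume j: "j \<in> {..k} - S'"
      then have "j \<noteq> 0" using S0 by (metis DiffD2)
      moreover have "j < 2*\<gamma> \<or> j = k" using kmin[of j] j by fastforce
      ultimately show "j \<in> ({1..2*\<gamma>} - S') \<union> {k}" using j by auto
    qed
    then have "card ({..k} - S') \<le> card (({1..2*\<gamma>} - S') \<union> {k})"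
      by (intro card_mono) auto
    also have "\<dots> \<le> card ({1..2*\<gamma>} - S') + 1" by (simp add: card_insert_le_m1 card_Un_le)
    finally have "card ({..k} - S') \<le> \<gamma> + 1" using c1 by linarith
    moreover have "card (S' \<inter> {..k}) \<le> card ({..k} - S')" using pair_card[OF S0 Sadd k(2)] .
    ultimately have "Suc k \<le> 2 * \<gamma> + 2" using card_split_atMost[of S' k] by linarith
    moreover have "k \<noteq> 2*\<gamma>" "k \<noteq> 2*\<gamma>+1" using k a2 a3 by auto
    ultimately show False using k(1) by linarith
  qed
  show ?thesis using c1 all unfolding S'_def by auto
qed

lemma card_res1: "card {x\<in>{1..n::nat}. x mod 3 = 1} = (n + 2) div 3"
proof (induction n)
  case 0 then show ?case by simp
next
  case (Suc n)
  show ?case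
  proof (cases "Suc n mod 3 = 1")
    case True
    then have "{x\<in>{1..Suc n}. x mod 3 = 1} = insert (Suc n) {x\<in>{1..n}. x mod 3 = 1}"
      by (auto simp: le_Suc_eq)
    then have "card {x\<in>{1..Suc n}. x mod 3 = 1} = Suc (card {x\<in>{1..n}. x mod 3 = 1})"
      by simp
    moreover have "(Suc n + 2) div 3 = Suc ((n + 2) div 3)" using True by presburger
    ultimately show ?thesis using Suc.IH by simp
  next
    case False
    then have "{x\<in>{1..Suc n}. x mod 3 = 1} = {x\<in>{1..n}. x mod 3 = 1}"
      by (auto simp: le_Suc_eq)
    moreover have "(Suc n + 2) div 3 = ((n + 2) div 3)" using False by presburger
    ultimately show ?thesis using Suc.IH by simp
  qed
qed

lemma card_res2: "card {x\<in>{1..n::nat}. x mod 3 = 2} = (n + 1) div 3"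
proof (induction n)
  case 0 then show ?case by simp
next
  case (Suc n)
  show ?case
  proof (cases "Suc n mod 3 = 2")
    case True
    then have "{x\<in>{1..Suc n}. x mod 3 = 2} = insert (Suc n) {x\<in>{1..n}. x mod 3 = 2}"
      by (auto simp: le_Suc_eq)
    then have "card {x\<in>{1..Suc n}. x mod 3 = 2} = Suc (card {x\<in>{1..n}. x mod 3 = 2})"
      by simp
    moreover have "(Suc n + 1) div 3 = Suc ((n + 1) div 3)" using True by presburger
    ultimately show ?thesis using Suc.IH by simp
  next
    case False
    then have "{x\<in>{1..Suc n}. x mod 3 = 2} = {x\<in>{1..n}. x mod 3 = 2}"
      by (auto simp: le_Suc_eq)
    moreover have "(Suc n + 1) div 3 = ((n + 1) div 3)" using False by presburger
    ultimately show ?thesis using Suc.IH by simp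
  qed
qed

lemma ceil3: "ceiling (real_of_int z / 3) = - ((- z) div 3)"
proof -
  have "- (real_of_int z / 3) = real_of_int (- z) / real_of_int 3" by simp
  then have "floor (- (real_of_int z / 3)) = (- z) div 3"
    by (metis floor_divide_of_int_eq)
  then show ?thesis unfolding ceiling_def by simp
qed

lemma final_arith:
  fixes c g gam u Ns G0 Gr Gs :: nat
  assumes "c + Gs = Ns" "G0 + Gr + Gs = g" "Gr \<le> u div 3 + G0" "G0 \<le> gam"
    "u mod 3 = 1 \<and> Ns = (2*g+1) div 3 \<or> u mod 3 = 2 \<and> Ns = (2*g+2) div 3"
  shows "int c \<le> int gam + - ((- (int u - int g + 3 * int gam - 1 - int ((g mod 3) div 2))) div 3)"
proof -
  have h: "int c \<le> int Ns - int g + 2 * int gam + int (u div 3)" using assms(1-4) by linarith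
  obtain q m where g: "g = 3*q + m" "m < 3" by (metis div_mult_mod_eq mod_less_divisor zero_less_numeral add.commute mult.commute)
  obtain j where u: "u = 3*j + u mod 3" by (metis div_mult_mod_eq mult.commute)
  have gm: "g mod 3 = m" "u div 3 = j" using g u by auto
  have "m = 0 \<or> m = 1 \<or> m = 2" using g by auto
  then show ?thesis using h assms(5) g u gm by (elim disjE; simp; presburger)
qed

lemma h1: "(2*g+1) mod 3 = (0::nat) \<Longrightarrow> (2*g+2) mod 3 \<noteq> 0"
proof -
  assume a: "(2*g+1) mod 3 = (0::nat)"
  have "(2*g+2) mod 3 = Suc (2*g+1) mod 3" by simp
  also have "\<dots> = 1" using a by (simp add: mod_Suc)
  finally show ?thesis by simp
qed
lemma h2: "x < u \<Longrightarrow> x mod 3 = u mod 3 \<Longrightarrow> x div 3 < (u::nat) div 3"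
proof -
  assume a: "x < u" "x mod 3 = u mod 3"
  have "3*(x div 3) + x mod 3 = x" "3*(u div 3) + u mod 3 = u" using div_mult_mod_eq[of x 3] div_mult_mod_eq[of u 3] by (simp_all add: mult.commute)
  then have "3*(x div 3) < 3*(u div 3)" using a by linarith
  then show ?thesis by simp
qed
lemma h3: "u < x \<Longrightarrow> x mod 3 = u mod 3 \<Longrightarrow> (x - u::nat) mod 3 = 0"
  by (metis less_imp_le mod_eq_dvd_iff_nat dvd_imp_mod_0)
lemma h4: "(u::nat) mod 3 \<noteq> 0 \<Longrightarrow> u mod 3 = 1 \<or> u mod 3 = 2"
proof -
  assume "u mod 3 \<noteq> 0"
  moreover have "u mod 3 < 3" by simp
  ultimately show ?thesis by arith
qed
lemma h5: "(x::nat) mod 3 = 0 \<or> x mod 3 = 1 \<or> x mod 3 = 2"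
proof -
  have "x mod 3 < 3" by simp
  then show ?thesis by arith
qed

theorem lemma2p2:
  fixes g \<gamma> :: nat and T :: "nat set"
  assumes "hyperelliptic3 \<gamma> T" and "genus T = g"
  shows "int (card (Tres T g (3 - u1 T mod 3)))
    \<le> int \<gamma> + ceiling (real_of_int (int (u1 T) - int g + 3 * int \<gamma> - 1 - int ((g mod 3) div 2)) / 3)"
proof -
  have ns: "numerical_semigroup T" using assms(1) unfolding hyperelliptic3_def by auto
  have fin: "finite (UNIV - T)" using ns unfolding numerical_semigroup_def by auto
  have add: "\<forall>a\<in>T. \<forall>b\<in>T. a + b \<in> T" using ns unfolding numerical_semigroup_def by auto
  have gap: "x \<notin> T \<Longrightarrow> 0 < x \<and> x < 2 * g" for x using gap_bound[OF ns] assms(2) by blast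
  have m3: "card ({1..2*\<gamma>} - {k. 3*k \<in> T}) \<le> \<gamma>" "\<forall>k\<ge>2*\<gamma>. 3*k \<in> T"
    using mult3[OF assms(1)] by auto
  have ex: "\<exists>t. t \<in> T \<and> t mod 3 \<noteq> 0"
  proof (cases "(2*g+1) mod 3 = 0")
    case True
    then have "(2*g+2) mod 3 \<noteq> 0" by (rule h1)
    moreover have "2*g+2 \<in> T" using gap[of "2*g+2"] by force
    ultimately show ?thesis by blast
  next
    case False
    moreover have "2*g+1 \<in> T" using gap[of "2*g+1"] by force
    ultimately show ?thesis by blast
  qed
  define u where "u = u1 T"
  have uT: "u \<in> T" and ur: "u mod 3 \<noteq> 0"
    using LeastI_ex[OF ex] unfolding u_def u1_def by auto
  have below: "x < u \<Longrightarrow> x mod 3 \<noteq> 0 \<Longrightarrow> x \<notin> T" for x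
    using not_less_Least[of x "\<lambda>t. t \<in> T \<and> t mod 3 \<noteq> 0"] unfolding u_def u1_def by blast
  define G where "G i = {x\<in>{1..2*g}. x mod 3 = i \<and> x \<notin> T}" for i :: nat
  define N where "N i = {x\<in>{1..2*g}. x mod 3 = (i::nat)}" for i
  have finG: "finite (G i)" for i unfolding G_def by auto
  have U: "UNIV - T = G 0 \<union> G 1 \<union> G 2"
  proof
    show "UNIV - T \<subseteq> G 0 \<union> G 1 \<union> G 2"
    proof
      fix x assume "x \<in> UNIV - T"
      then have "x \<notin> T" "1 \<le> x" "x \<le> 2*g" using gap[of x] by auto
      moreover have "x mod 3 = 0 \<or> x mod 3 = 1 \<or> x mod 3 = 2" by (rule h5)
      ultimately show "x \<in> G 0 \<union> G 1 \<union> G 2" unfolding G_def by auto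
    qed
  qed (auto simp: G_def)
  have gsum: "card (G 0) + card (G 1) + card (G 2) = g"
  proof -
    have "card (G 0 \<union> G 1 \<union> G 2) = card (G 0 \<union> G 1) + card (G 2)"
      by (rule card_Un_disjoint) (auto simp: G_def finG)
    also have "card (G 0 \<union> G 1) = card (G 0) + card (G 1)"
      by (rule card_Un_disjoint) (auto simp: G_def finG)
    finally show ?thesis using U assms(2) unfolding genus_def by simp
  qed
  have G0: "card (G 0) \<le> \<gamma>"
  proof -
    have "G 0 \<subseteq> (\<lambda>k. 3*k) ` ({1..2*\<gamma>} - {k. 3*k \<in> T})"
    proof
      fix x assume x: "x \<in> G 0"
      then obtain k where k: "x = 3*k" unfolding G_def by auto
      have "k \<ge> 1" using x k unfolding G_def by auto
      moreover have "k < 2*\<gamma>"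
      proof (rule ccontr)
        assume "\<not> k < 2*\<gamma>"
        then have "3*k \<in> T" using m3(2) by simp
        then show False using x k unfolding G_def by simp
      qed
      moreover have "3*k \<notin> T" using x k unfolding G_def by auto
      ultimately show "x \<in> (\<lambda>k. 3*k) ` ({1..2*\<gamma>} - {k. 3*k \<in> T})" using k by auto
    qed
    then have "card (G 0) \<le> card ((\<lambda>k. 3*k) ` ({1..2*\<gamma>} - {k. 3*k \<in> T}))"
      by (intro card_mono) auto
    also have "\<dots> \<le> card ({1..2*\<gamma>} - {k. 3*k \<in> T})" by (rule card_image_le) auto
    finally show ?thesis using m3(1) by linarith
  qed
  define r where "r = u mod 3"
  have Gr: "card (G r) \<le> u div 3 + card (G 0)"
  proof -
    define A1 where "A1 = {x\<in>G r. x < u}"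
    define A2 where "A2 = {x\<in>G r. u < x}"
    have "G r \<subseteq> A1 \<union> A2"
    proof
      fix x assume x: "x \<in> G r"
      then have "x \<noteq> u" using uT unfolding G_def by auto
      then have "x < u \<or> u < x" by arith
      then show "x \<in> A1 \<union> A2" using x unfolding A1_def A2_def by blast
    qed
    then have "card (G r) \<le> card (A1 \<union> A2)" by (intro card_mono) (auto simp: A1_def A2_def finG)
    also have "\<dots> \<le> card A1 + card A2" by (rule card_Un_le)
    finally have c: "card (G r) \<le> card A1 + card A2" .
    have "card A1 \<le> card {..<u div 3}"
    proof (rule card_inj_on_le[where f = "\<lambda>x. x div 3"])
      show "inj_on (\<lambda>x. x div 3) A1"
      proof (rule inj_onI)
        fix x y assume "x \<in> A1" "y \<in> A1" "x div 3 = y div 3"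
        then have "x mod 3 = y mod 3" "x div 3 = y div 3" unfolding A1_def G_def by auto
        then show "x = y" by (metis div_mult_mod_eq)
      qed
      show "(\<lambda>x. x div 3) ` A1 \<subseteq> {..<u div 3}"
      proof
        fix y assume "y \<in> (\<lambda>x. x div 3) ` A1"
        then obtain x where x: "x \<in> A1" "y = x div 3" by auto
        then have "x < u" "x mod 3 = u mod 3" unfolding A1_def G_def r_def by auto
        then have "x div 3 < u div 3" by (rule h2)
        then show "y \<in> {..<u div 3}" using x by simp
      qed
    qed auto
    then have c1: "card A1 \<le> u div 3" by simp
    have "card A2 \<le> card (G 0)"
    proof (rule card_inj_on_le[where f = "\<lambda>x. x - u"])
      show "inj_on (\<lambda>x. x - u) A2" unfolding A2_def by (auto simp: inj_on_def)
      show "(\<lambda>x. x - u) ` A2 \<subseteq> G 0"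
      proof
        fix y assume "y \<in> (\<lambda>x. x - u) ` A2"
        then obtain x where x: "x \<in> A2" "y = x - u" by auto
        then have xx: "u < x" "x mod 3 = u mod 3" "x \<notin> T" "x \<le> 2*g" unfolding A2_def G_def r_def by auto
        have "y mod 3 = 0" using h3[OF xx(1,2)] x(2) by simp
        moreover have "y \<notin> T"
        proof
          assume "y \<in> T"
          then have "u + y \<in> T" using add uT by blast
          then show False using xx x(2) by simp
        qed
        moreover have "1 \<le> y" "y \<le> 2*g" using xx x(2) by auto
        ultimately show "y \<in> G 0" unfolding G_def by auto
      qed
    qed (rule finG)
    with c c1 show ?thesis by linarith
  qed
  define s where "s = 3 - r"
  have rr: "r = 1 \<or> r = 2" using h4[OF ur] unfolding r_def .
  have s0: "s \<noteq> 0" "s < 3" using rr unfolding s_def by auto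
  have cN: "card (Tres T g s) + card (G s) = card (N s)"
  proof -
    have "N s = Tres T g s \<union> G s" unfolding N_def G_def Tres_def by auto
    moreover have "Tres T g s \<inter> G s = {}" unfolding G_def Tres_def by auto
    moreover have "finite (Tres T g s)" unfolding Tres_def by auto
    ultimately show ?thesis using card_Un_disjoint[of "Tres T g s" "G s"] finG by simp
  qed
  have gs3: "card (G 0) + card (G r) + card (G s) = g"
    using gsum rr unfolding s_def by auto
  have Ns: "u mod 3 = 1 \<and> card (N s) = (2*g+1) div 3 \<or> u mod 3 = 2 \<and> card (N s) = (2*g+2) div 3"
    using rr card_res1[of "2*g"] card_res2[of "2*g"] unfolding s_def r_def N_def
    by (auto simp: add.commute)
  have fa: "int (card (Tres T g s)) \<le> int \<gamma> + - ((- (int u - int g + 3 * int \<gamma> - 1 - int ((g mod 3) div 2))) div 3)"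
    by (rule final_arith[OF cN gs3 Gr G0 Ns])
  show ?thesis using fa unfolding ceil3 s_def r_def u_def .
qed

end
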